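(* Let $\phi$ be a continuous flow on a compact metric space $(X,d)$. Then $\phi$ is expansive if and only if every point of $X$ is uniformly-expansive.
   Context: A continuous flow is a continuous map $\phi:\mathbb{R}\times X\to X$, $\phi^t(x)=\phi(t,x)$, with $\phi^0=\mathrm{id}$, $\phi^{t+s}=\phi^s\circ\phi^t$; $O(x)=\{\phi^t(x):t\in\mathbb{R}\}$. A reparametrization is an increasing homeomorphism $h:\mathbb{R}\to\mathbb{R}$ with $h(0)=0$. $\phi$ is expansive if for every $\varepsilon>0$ there is $\delta>0$ such that whenever $x,y\in X$ and some reparametrization $h$ satisfy $d(\phi^t(x),\phi^{h(t)}(y))<\delta$ for all $t\in\mathbb{R}$, then $y=\phi^s(z)$ with $z\in O(x)$ and $|s|<\varepsilon$. A point $x$ is uniformly-expansive if there is a neighborhood $U$ of $x$ such that for every $\varepsilon>0$ there is $\delta>0$ such that whenever $y,z\in U$ and some reparametrization $h$ satisfies $d(\phi^t(y),\phi^{h(t)}(z))<\delta$ for all $t\in\mathbb{R}$, then $y=\phi^s(w)$ with $w\in O(z)$ and $|s|<\varepsilon$. *)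

theory Defs
  imports "HOL-Analysis.Analysis"
begin

definition cflow :: "'a::metric_space set \<Rightarrow> (real \<Rightarrow> 'a \<Rightarrow> 'a) \<Rightarrow> bool" where
  "cflow X phi \<longleftrightarrow>
     continuous_on (UNIV \<times> X) (\<lambda>(t, x). phi t x) \<and>
     (\<forall>t. \<forall>x\<in>X. phi t x \<in> X) \<and>
     (\<forall>x\<in>X. phi 0 x = x) \<and>
     (\<forall>t s. \<forall>x\<in>X. phi (t + s) x = phi s (phi t x))"

definition orbit :: "(real \<Rightarrow> 'a \<Rightarrow> 'a) \<Rightarrow> 'a \<Rightarrow> 'a set" where
  "orbit phi x = {phi t x | t. True}"

definition reparam :: "(real \<Rightarrow> real) \<Rightarrow> bool" where
  "reparam h \<longleftrightarrow> homeomorphism UNIV UNIV h (inv h) \<and> strict_mono h \<and> h 0 = 0"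

definition expansive_flow :: "'a::metric_space set \<Rightarrow> (real \<Rightarrow> 'a \<Rightarrow> 'a) \<Rightarrow> bool" where
  "expansive_flow X phi \<longleftrightarrow>
     (\<forall>\<epsilon>>0. \<exists>\<delta>>0. \<forall>x\<in>X. \<forall>y\<in>X. \<forall>h.
        reparam h \<and> (\<forall>t. dist (phi t x) (phi (h t) y) < \<delta>) \<longrightarrow>
        (\<exists>s z. z \<in> orbit phi x \<and> \<bar>s\<bar> < \<epsilon> \<and> y = phi s z))"

definition uniformly_expansive_point ::
    "'a::metric_space set \<Rightarrow> (real \<Rightarrow> 'a \<Rightarrow> 'a) \<Rightarrow> 'a \<Rightarrow> bool" where
  "uniformly_expansive_point X phi x \<longleftrightarrow>
     (\<exists>U. openin (top_of_set X) U \<and> x \<in> U \<and>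
        (\<forall>\<epsilon>>0. \<exists>\<delta>>0. \<forall>y\<in>U. \<forall>z\<in>U. \<forall>h.
           reparam h \<and> (\<forall>t. dist (phi t y) (phi (h t) z) < \<delta>) \<longrightarrow>
           (\<exists>s w. w \<in> orbit phi z \<and> \<bar>s\<bar> < \<epsilon> \<and> y = phi s w)))"

end

theory Submission
  imports Defs
begin

lemma orbA:
  assumes "cflow X phi" "z \<in> X" "\<exists>s w. w \<in> orbit phi z \<and> \<bar>s\<bar> < (e::real) \<and> y = phi s w"
  shows "y \<in> orbit phi z"
proof -
  from assms(3) obtain s w where w: "w \<in> orbit phi z" "y = phi s w" by blast
  then obtain t where "w = phi t z" unfolding orbit_def by blast
  then have "y = phi (t + s) z" using assms(1,2) w(2) unfolding cflow_def by simp
  then show ?thesis unfolding orbit_def by blast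
qed

lemma orbB:
  assumes "cflow X phi" "z \<in> X" "y \<in> orbit phi z" "(e::real) > 0"
  shows "\<exists>s w. w \<in> orbit phi z \<and> \<bar>s\<bar> < e \<and> y = phi s w"
proof -
  from assms(3) obtain t where "y = phi t z" unfolding orbit_def by blast
  then have "y \<in> X" using assms(1,2) unfolding cflow_def by simp
  then have "y = phi 0 y" using assms(1) unfolding cflow_def by simp
  then show ?thesis using assms(3,4) by (intro exI[of _ 0] exI[of _ y]) simp
qed

lemma orbC:
  assumes "cflow X phi" "z \<in> X" "y \<in> orbit phi z"
  shows "z \<in> orbit phi y"
proof -
  from assms(3) obtain t where t: "y = phi t z" unfolding orbit_def by blast
  have "phi (-t) y = phi (t + - t) z" using assms(1,2) t unfolding cflow_def by metis
  also have "\<dots> = z" using assms(1,2) unfolding cflow_def by simp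
  finally show ?thesis unfolding orbit_def by blast
qed

theorem mainTheorem5:
  fixes X :: "'a::metric_space set" and phi :: "real \<Rightarrow> 'a \<Rightarrow> 'a"
  assumes "compact X" and "cflow X phi"
  shows "expansive_flow X phi \<longleftrightarrow> (\<forall>x\<in>X. uniformly_expansive_point X phi x)"
proof
  assume E: "expansive_flow X phi"
  show "\<forall>x\<in>X. uniformly_expansive_point X phi x"
  proof (intro ballI)
    fix x assume "x \<in> X"
    show "uniformly_expansive_point X phi x"
      unfolding uniformly_expansive_point_def
    proof (intro exI[of _ X] conjI allI impI)
      show "openin (top_of_set X) X" by simp
      show "x \<in> X" by fact
      fix e :: real assume e: "e > 0"
      from E e obtain d where d: "d > 0" and
        H: "\<forall>x\<in>X. \<forall>y\<in>X. \<forall>h. reparam h \<and> (\<forall>t. dist (phi t x) (phi (h t) y) < d) \<longrightarrow>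
        (\<exists>s z. z \<in> orbit phi x \<and> \<bar>s\<bar> < e \<and> y = phi s z)"
        unfolding expansive_flow_def by blast
      show "\<exists>d>0. \<forall>y\<in>X. \<forall>z\<in>X. \<forall>h.
           reparam h \<and> (\<forall>t. dist (phi t y) (phi (h t) z) < d) \<longrightarrow>
           (\<exists>s w. w \<in> orbit phi z \<and> \<bar>s\<bar> < e \<and> y = phi s w)"
      proof (rule exI[of _ d], intro conjI ballI allI impI)
        show "d > 0" by fact
        fix y z h assume yz: "y \<in> X" "z \<in> X" and
          hh: "reparam h \<and> (\<forall>t. dist (phi t y) (phi (h t) z) < d)"
        have "\<exists>s w. w \<in> orbit phi y \<and> \<bar>s\<bar> < e \<and> z = phi s w" using H yz hh by blast
        then have "z \<in> orbit phi y" using orbA[OF assms(2) yz(1)] by blast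
        then have "y \<in> orbit phi z" using orbC[OF assms(2) yz(1)] by blast
        then show "\<exists>s w. w \<in> orbit phi z \<and> \<bar>s\<bar> < e \<and> y = phi s w"
          using orbB[OF assms(2) yz(2) _ e] by metis
      qed
    qed
  qed
next
  assume U: "\<forall>x\<in>X. uniformly_expansive_point X phi x"
  have "\<forall>x\<in>X. \<exists>V d. open V \<and> x \<in> V \<and> d > 0 \<and> (\<forall>y\<in>X \<inter> V. \<forall>z\<in>X \<inter> V. \<forall>h.
     reparam h \<and> (\<forall>t. dist (phi t y) (phi (h t) z) < d) \<longrightarrow> y \<in> orbit phi z)"
  proof
    fix x assume x: "x \<in> X"
    from U x have "uniformly_expansive_point X phi x" by blast
    then obtain W where W: "openin (top_of_set X) W" "x \<in> W" and
      H: "\<forall>e>0. \<exists>d>0. \<forall>y\<in>W. \<forall>z\<in>W. \<forall>h.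
           reparam h \<and> (\<forall>t. dist (phi t y) (phi (h t) z) < d) \<longrightarrow>
           (\<exists>s w. w \<in> orbit phi z \<and> \<bar>s\<bar> < e \<and> y = phi s w)"
      by - (unfold uniformly_expansive_point_def, elim exE conjE, rule that, assumption+)
    from W(1) obtain V where V: "open V" "W = X \<inter> V" by (auto simp: openin_open)
    from H[rule_format, OF zero_less_one] obtain d where d: "d > 0" and
      H1: "\<forall>y\<in>W. \<forall>z\<in>W. \<forall>h.
           reparam h \<and> (\<forall>t. dist (phi t y) (phi (h t) z) < d) \<longrightarrow>
           (\<exists>s w. w \<in> orbit phi z \<and> \<bar>s\<bar> < (1::real) \<and> y = phi s w)"
      by - (elim exE conjE, rule that, assumption+)
    have "\<forall>y\<in>X \<inter> V. \<forall>z\<in>X \<inter> V. \<forall>h.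
     reparam h \<and> (\<forall>t. dist (phi t y) (phi (h t) z) < d) \<longrightarrow> y \<in> orbit phi z"
    proof (intro ballI allI impI)
      fix y z h assume yz: "y \<in> X \<inter> V" "z \<in> X \<inter> V" and
        hh: "reparam h \<and> (\<forall>t. dist (phi t y) (phi (h t) z) < d)"
      have "\<exists>s w. w \<in> orbit phi z \<and> \<bar>s\<bar> < (1::real) \<and> y = phi s w"
        using H1 V(2) yz hh by blast
      then show "y \<in> orbit phi z" using orbA[OF assms(2)] yz by blast
    qed
    then show "\<exists>V d. open V \<and> x \<in> V \<and> d > 0 \<and> (\<forall>y\<in>X \<inter> V. \<forall>z\<in>X \<inter> V. \<forall>h.
     reparam h \<and> (\<forall>t. dist (phi t y) (phi (h t) z) < d) \<longrightarrow> y \<in> orbit phi z)"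
      using V W d by blast
  qed
  then obtain V D where VD: "\<And>x. x \<in> X \<Longrightarrow> open (V x) \<and> x \<in> V x \<and> D x > 0 \<and>
     (\<forall>y\<in>X \<inter> V x. \<forall>z\<in>X \<inter> V x. \<forall>h.
     reparam h \<and> (\<forall>t. dist (phi t y) (phi (h t) z) < D x) \<longrightarrow> y \<in> orbit phi z)"
    by metis
  show "expansive_flow X phi"
  proof (cases "X = {}")
    case True then show ?thesis unfolding expansive_flow_def by auto
  next
    case False
    have cov: "X \<subseteq> (\<Union>c\<in>X. V c)" using VD by blast
    obtain F where F: "F \<subseteq> X" "finite F" "X \<subseteq> (\<Union>c\<in>F. V c)"
      using compactE_image[OF assms(1), of X V] VD cov by blast
    have Fne: "F \<noteq> {}" using F(3) False by blast
    obtain e where e: "e > 0" "\<And>x. x \<in> X \<Longrightarrow> \<exists>G \<in> V ` F. ball x e \<subseteq> G"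
      using Heine_Borel_lemma[OF assms(1), of "V ` F"] F VD by blast
    define d0 where "d0 = min e (Min (D ` F))"
    have d0: "d0 > 0" unfolding d0_def using e F Fne VD by (auto simp: Min_gr_iff)
    have d0D: "d0 \<le> D p" if "p \<in> F" for p
      unfolding d0_def using F(2) that by (simp add: min.coboundedI2)
    show ?thesis unfolding expansive_flow_def
    proof (intro allI impI)
      fix eps :: real assume eps: "eps > 0"
      show "\<exists>d>0. \<forall>x\<in>X. \<forall>y\<in>X. \<forall>h.
        reparam h \<and> (\<forall>t. dist (phi t x) (phi (h t) y) < d) \<longrightarrow>
        (\<exists>s z. z \<in> orbit phi x \<and> \<bar>s\<bar> < eps \<and> y = phi s z)"
    proof (rule exI[of _ d0], intro conjI ballI allI impI)
      show "d0 > 0" by fact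
      fix x y h assume xy: "x \<in> X" "y \<in> X" and
        hh: "reparam h \<and> (\<forall>t. dist (phi t x) (phi (h t) y) < d0)"
      have "dist (phi 0 x) (phi (h 0) y) < d0" using hh by blast
      then have dxy: "dist x y < d0" using hh xy assms(2) unfolding reparam_def cflow_def by simp
      obtain p where p: "p \<in> F" "ball x e \<subseteq> V p" using e(2)[OF xy(1)] by blast
      have "y \<in> ball x e" using dxy unfolding d0_def by simp
      then have inV: "x \<in> V p" "y \<in> V p" using p e(1) by auto
      have "\<forall>t. dist (phi t x) (phi (h t) y) < D p" using hh d0D[OF p(1)] by (meson less_le_trans)
      then have "x \<in> orbit phi y"
        using VD[of p] p(1) F(1) inV xy hh by (meson IntI subsetD)
      then have "y \<in> orbit phi x" using orbC[OF assms(2) xy(2)] by blast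
      then show "\<exists>s z. z \<in> orbit phi x \<and> \<bar>s\<bar> < eps \<and> y = phi s z"
        using orbB[OF assms(2) xy(1) _ eps] by blast
    qed
    qed
  qed
qed

end
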